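(* Let $c_1>0$ and let $b:[0,c_1]\to\mathbb R$ be Lipschitz continuous with $b(0)=1$. Let $c<d$. Then there is a constant $C_2>0$ such that for all $R>|c|+|d|$ and all $f\in C^{1/2}_c(c,d)$, $$\Big\|\sup_{a\in[0,c_1]}|L_af|\Big\|_{L^\infty[-R,R]}\le C_2(1+|d-c|)R^{1/2}\|f\|_{C^{1/2}_c(c,d)}.$$
   Context: For $a>0$ and $f\in L^1(\mathbb R)$, $L_af(u)=\frac{1}{\sqrt{2\pi}}\frac{e^{i\pi/4}}{\sqrt{2a}}\int_{\mathbb R}f(t)e^{-i\frac{(b(a)u-t)^2}{4a}}dt$, and $L_0f(u)=f(b(0)u)=f(u)$; for Schwartz $f$ this equals $\frac1{\sqrt{2\pi}}\int_{\mathbb R}e^{i[b(a)uv+av^2]}\hat f(v)dv$ with $\hat f(v)=\frac1{\sqrt{2\pi}}\int e^{-ivt}f(t)dt$. $C^{s}_c(c,d)$ denotes the space of (complex-valued) functions on $\mathbb R$ supported in $(c,d)$ which are Hölder continuous of exponent $s$, with norm $\|f\|_{C^s_c(c,d)}=\sup|f|+\sup_{x\ne y}\frac{|f(x)-f(y)|}{|x-y|^s}$. *)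

theory Defs
  imports "HOL-Analysis.Analysis" "HOL-Probability.Essential_Supremum"
begin

definition L_op :: "(real \<Rightarrow> real) \<Rightarrow> real \<Rightarrow> (real \<Rightarrow> complex) \<Rightarrow> real \<Rightarrow> complex" where
  "L_op b a f u =
     (if a = 0 then f (b 0 * u)
      else complex_of_real (1 / sqrt (2 * pi)) * cis (pi / 4) / complex_of_real (sqrt (2 * a))
           * (LINT t|lborel. f t * cis (- ((b a * u - t)\<^sup>2 / (4 * a)))))"

definition holder_c :: "real \<Rightarrow> real \<Rightarrow> real \<Rightarrow> (real \<Rightarrow> complex) \<Rightarrow> bool" where
  "holder_c s c d f \<longleftrightarrow>
     (\<forall>x. x \<notin> {c<..<d} \<longrightarrow> f x = 0) \<and>
     (\<exists>K. \<forall>x y. cmod (f x - f y) \<le> K * \<bar>x - y\<bar> powr s)"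

definition holder_norm :: "real \<Rightarrow> (real \<Rightarrow> complex) \<Rightarrow> real" where
  "holder_norm s f =
     (SUP x. cmod (f x)) +
     (SUP p \<in> {p::real\<times>real. fst p \<noteq> snd p}.
        cmod (f (fst p) - f (snd p)) / \<bar>fst p - snd p\<bar> powr s)"

end

theory Submission
  imports Defs
begin

lemma cis_shift: "cis (- (x + pi)) = - cis (- x)"
  by (simp add: cis.ctr complex_eq_iff)

lemma rho_deriv:
  assumes "r > 0"
  shows "((\<lambda>s. sqrt (s\<^sup>2 + r\<^sup>2)) has_field_derivative (s / sqrt (s\<^sup>2 + r\<^sup>2))) (at s within X)"
proof -
  have p: "s\<^sup>2 + r\<^sup>2 > 0" using assms by (simp add: add_nonneg_pos)
  have d1: "((\<lambda>s. s\<^sup>2 + r\<^sup>2) has_field_derivative 2 * s) (at s)"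
    by (auto intro!: derivative_eq_intros)
  have d2: "(sqrt has_field_derivative inverse (sqrt (s\<^sup>2 + r\<^sup>2)) / 2) (at (s\<^sup>2 + r\<^sup>2))"
    by (rule DERIV_real_sqrt[OF p])
  have "((\<lambda>s. sqrt (s\<^sup>2 + r\<^sup>2)) has_field_derivative inverse (sqrt (s\<^sup>2 + r\<^sup>2)) / 2 * (2 * s)) (at s)"
    by (rule DERIV_chain2[OF d2 d1])
  moreover have "inverse (sqrt (s\<^sup>2 + r\<^sup>2)) / 2 * (2 * s) = s / sqrt (s\<^sup>2 + r\<^sup>2)"
    by (simp add: divide_simps)
  ultimately show ?thesis by (simp add: has_field_derivative_at_within)
qed

lemma R1:
  fixes s r \<rho> :: real
  assumes "s \<ge> 0" "r > 0" "\<rho> \<ge> 0" "\<rho>\<^sup>2 = s\<^sup>2 + r\<^sup>2"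
  shows "\<bar>s - \<rho>\<bar> powr (1/2) \<le> r / sqrt (s + r)"
proof -
  have rs: "\<rho> \<ge> s" "\<rho> \<ge> r"
    using assms by (metis abs_of_nonneg add.commute le_add_same_cancel2 less_imp_le real_le_rsqrt real_sqrt_abs zero_le_power2 )+
  have "(\<rho> - s) * (\<rho> + s) = r\<^sup>2" using assms(4) by (simp add: power2_eq_square algebra_simps)
  moreover have "(\<rho> - s) * (s + r) \<le> (\<rho> - s) * (\<rho> + s)"
    using rs by (intro mult_left_mono) auto
  ultimately have k: "(\<rho> - s) * (s + r) \<le> r\<^sup>2" by simp
  have "\<bar>s - \<rho>\<bar> powr (1/2) = sqrt (\<rho> - s)" using rs by (simp add: powr_half_sqrt)
  also have "\<dots> = sqrt ((\<rho> - s) * (s + r)) / sqrt (s + r)"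
    using assms by (simp add: real_sqrt_mult)
  also have "\<dots> \<le> sqrt (r\<^sup>2) / sqrt (s + r)"
    using real_sqrt_le_mono[OF k] assms by (intro divide_right_mono) auto
  also have "\<dots> = r / sqrt (s + r)" using assms by simp
  finally show ?thesis .
qed

lemma R2:
  fixes s r \<rho> :: real
  assumes "s \<ge> 0" "r > 0" "\<rho> \<ge> 0" "\<rho>\<^sup>2 = s\<^sup>2 + r\<^sup>2"
  shows "\<bar>1 - s / \<rho>\<bar> \<le> 2 * r\<^sup>2 / (s + r)\<^sup>2"
proof -
  have rs: "\<rho> \<ge> s" "\<rho> \<ge> r"
    using assms by (metis abs_of_nonneg add.commute le_add_same_cancel2 less_imp_le real_le_rsqrt real_sqrt_abs zero_le_power2 )+
  have rp: "\<rho> > 0" using rs assms by linarith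
  have e1: "(\<rho> - s) * (\<rho> + s) = r\<^sup>2" using assms(4) by (simp add: power2_eq_square algebra_simps)
  have sq: "(s + r)\<^sup>2 \<le> 2 * \<rho> * (\<rho> + s)"
  proof -
    have "0 \<le> (s - r)\<^sup>2" by simp
    then have "(s + r)\<^sup>2 \<le> 2 * (s\<^sup>2 + r\<^sup>2)" by (simp add: power2_sum power2_diff)
    also have "\<dots> = 2 * \<rho> * \<rho>" using assms(4) by (simp add: power2_eq_square)
    also have "\<dots> \<le> 2 * \<rho> * (\<rho> + s)" using assms rp by (intro mult_left_mono) auto
    finally show ?thesis .
  qed
  have "(\<rho> - s) * (s + r)\<^sup>2 \<le> (\<rho> - s) * (2 * \<rho> * (\<rho> + s))"
    using sq rs by (intro mult_left_mono) auto
  also have "\<dots> = 2 * \<rho> * ((\<rho> - s) * (\<rho> + s))" by (simp add: algebra_simps)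
  also have "\<dots> = 2 * \<rho> * r\<^sup>2" using e1 by simp
  finally have k: "(\<rho> - s) * (s + r)\<^sup>2 \<le> 2 * \<rho> * r\<^sup>2" .
  have "\<bar>1 - s / \<rho>\<bar> = (\<rho> - s) / \<rho>" using rp rs by (simp add: field_simps)
  also have "\<dots> \<le> 2 * r\<^sup>2 / (s + r)\<^sup>2"
  proof -
    have sr: "(s + r)\<^sup>2 > 0" using assms by simp
    have "\<rho> - s \<le> 2 * \<rho> * r\<^sup>2 / (s + r)\<^sup>2"
      using k sr by (simp add: pos_le_divide_eq)
    then have "\<rho> - s \<le> (2 * r\<^sup>2 / (s + r)\<^sup>2) * \<rho>" by (metis mult.assoc mult.commute times_divide_eq_left)
    then show ?thesis using rp by (simp add: pos_divide_le_eq)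
  qed
  finally show ?thesis .
qed

lemma A_deriv:
  fixes H S r s :: real
  assumes sp: "s + r > 0"
  shows "((\<lambda>s. 2 * H * r * sqrt (s + r) - 2 * S * r\<^sup>2 / (s + r)) has_real_derivative
      (H * r / sqrt (s + r) + 2 * S * r\<^sup>2 / (s + r)\<^sup>2)) (at s)"
proof -
  have d1: "((\<lambda>s. s + r) has_real_derivative 1) (at s)"
    by (auto intro!: derivative_eq_intros)
  have "((\<lambda>s. sqrt (s + r)) has_real_derivative inverse (sqrt (s + r)) / 2 * 1) (at s)"
    by (rule DERIV_chain2[OF DERIV_real_sqrt[OF sp] d1])
  then have a: "((\<lambda>s. 2 * H * r * sqrt (s + r)) has_real_derivative 2 * H * r * (inverse (sqrt (s + r)) / 2 * 1)) (at s)"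
    by (rule DERIV_cmult)
  have "((\<lambda>s. inverse (s + r)) has_real_derivative - (1 * inverse ((s + r) ^ Suc (Suc 0)))) (at s)"
    by (rule DERIV_inverse_fun[OF d1]) (use sp in simp)
  then have b: "((\<lambda>s. 2 * S * r\<^sup>2 * inverse (s + r)) has_real_derivative 2 * S * r\<^sup>2 * (- (1 * inverse ((s + r) ^ Suc (Suc 0))))) (at s)"
    by (rule DERIV_cmult)
  have "((\<lambda>s. 2 * H * r * sqrt (s + r) - 2 * S * r\<^sup>2 * inverse (s + r)) has_real_derivative
     2 * H * r * (inverse (sqrt (s + r)) / 2 * 1) - 2 * S * r\<^sup>2 * (- (1 * inverse ((s + r) ^ Suc (Suc 0))))) (at s)"
    by (rule DERIV_diff[OF a b])
  moreover have "2 * H * r * (inverse (sqrt (s + r)) / 2 * 1) - 2 * S * r\<^sup>2 * (- (1 * inverse ((s + r) ^ Suc (Suc 0))))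
     = H * r / sqrt (s + r) + 2 * S * r\<^sup>2 / (s + r)\<^sup>2"
    by (simp add: divide_simps power2_eq_square)
  moreover have fe: "(\<lambda>s. 2 * H * r * sqrt (s + r) - 2 * S * r\<^sup>2 / (s + r)) = (\<lambda>s. 2 * H * r * sqrt (s + r) - 2 * S * r\<^sup>2 * inverse (s + r))"
    by (simp only: divide_inverse)
  ultimately show ?thesis by metis
qed

lemma holder_cont:
  fixes g :: "real \<Rightarrow> complex"
  assumes H: "\<And>x y. cmod (g x - g y) \<le> H * \<bar>x - y\<bar> powr (1/2)" and H0: "H \<ge> 0"
  shows "continuous_on UNIV g"
  unfolding continuous_on_iff
proof (intro ballI allI impI)
  fix x e :: real assume e: "e > 0"
  define d where "d = (e / (H + 1))\<^sup>2"
  have d: "d > 0" using e H0 by (simp add: d_def)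
  show "\<exists>d>0. \<forall>x'\<in>UNIV. dist x' x < d \<longrightarrow> dist (g x') (g x) < e"
  proof (intro exI[of _ d] conjI ballI impI d)
    fix x' assume "dist x' x < d"
    then have "\<bar>x' - x\<bar> < d" by (simp add: dist_real_def)
    then have "sqrt \<bar>x' - x\<bar> < sqrt d" by simp
    also have "sqrt d = e / (H + 1)" using e H0 by (simp add: d_def)
    finally have lt: "sqrt \<bar>x' - x\<bar> < e / (H + 1)" .
    have "dist (g x') (g x) \<le> H * sqrt \<bar>x' - x\<bar>"
      using H[of x' x] by (simp add: dist_norm powr_half_sqrt)
    also have "\<dots> \<le> (H + 1) * sqrt \<bar>x' - x\<bar>" by (simp add: mult_right_mono)
    also have "\<dots> < (H + 1) * (e / (H + 1))" using lt H0 by (intro mult_strict_left_mono) auto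
    also have "\<dots> = e" using H0 by simp
    finally show "dist (g x') (g x) < e" .
  qed
qed

lemma osc_bound:
  fixes g :: "real \<Rightarrow> complex" and a L S H :: real
  assumes a: "a > 0" and L: "L > 0" and S: "\<And>s. cmod (g s) \<le> S"
    and H: "\<And>x y. cmod (g x - g y) \<le> H * \<bar>x - y\<bar> powr (1/2)" and H0: "H \<ge> 0"
    and z: "\<And>s. s \<ge> L \<Longrightarrow> g s = 0"
  shows "cmod (integral {0..L} (\<lambda>s. g s * cis (- (s\<^sup>2 / (4*a))))) \<le> sqrt (4*pi*a) * (2 * S + 2 * H * sqrt L)"
proof -
  define r where "r = sqrt (4*pi*a)"
  have r: "r > 0" using a by (simp add: r_def)
  have r2: "r\<^sup>2 = 4*pi*a" using a by (simp add: r_def)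
  define E where "E s = cis (- (s\<^sup>2 / (4*a)))" for s
  define rho where "rho s = sqrt (s\<^sup>2 + r\<^sup>2)" for s
  have rho2: "(rho s)\<^sup>2 = s\<^sup>2 + r\<^sup>2" for s by (simp add: rho_def)
  have rho0: "rho s \<ge> 0" for s by (simp add: rho_def)
  have rhor: "rho s \<ge> r" for s unfolding rho_def by (rule real_le_rsqrt) simp
  have rhos: "rho s \<ge> s" for s unfolding rho_def by (rule real_le_rsqrt) simp
  have rhopos: "rho s > 0" for s using rhor[of s] r by linarith
  have rhor0: "rho 0 = r" using r by (simp add: rho_def)
  have Erho: "E (rho s) = - E s" for s
  proof -
    have "(rho s)\<^sup>2 / (4*a) = s\<^sup>2 / (4*a) + pi" using a by (simp add: rho2 r2 field_simps)
    then have "E (rho s) = cis (- (s\<^sup>2 / (4*a) + pi))" by (simp only: E_def)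
    also have "\<dots> = - E s" by (simp only: cis_shift E_def)
    finally show ?thesis .
  qed
  have S0: "S \<ge> 0" using S[of 0] norm_ge_zero order_trans by blast
  have gc: "continuous_on UNIV g" by (rule holder_cont[OF H H0])
  have Ec: "continuous_on UNIV E" unfolding E_def by (intro continuous_intros) (use a in auto)
  have gEc: "continuous_on UNIV (\<lambda>s. g s * E s)" by (intro continuous_intros gc Ec)
  have gEi: "(\<lambda>s. g s * E s) integrable_on {p..q}" for p q
    by (rule integrable_continuous_real) (rule continuous_on_subset[OF gEc], simp)
  define I where "I = integral {0..L} (\<lambda>s. g s * E s)"
  have I1: "integral {0..rho L} (\<lambda>s. g s * E s) = I"
  proof -
    have "integral {L..rho L} (\<lambda>s. g s * E s) = integral {L..rho L} (\<lambda>s. 0)"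
      by (rule integral_cong) (simp add: z)
    then have "integral {L..rho L} (\<lambda>s. g s * E s) = 0" by simp
    moreover have "integral {0..L} (\<lambda>s. g s * E s) + integral {L..rho L} (\<lambda>s. g s * E s)
        = integral {0..rho L} (\<lambda>s. g s * E s)"
      using L rhos[of L] by (intro Henstock_Kurzweil_Integration.integral_combine gEi) auto
    ultimately show ?thesis by (simp add: I_def)
  qed
  have I2: "integral {0..r} (\<lambda>s. g s * E s) + integral {r..rho L} (\<lambda>s. g s * E s)
        = integral {0..rho L} (\<lambda>s. g s * E s)"
    using r rhor[of L] by (intro Henstock_Kurzweil_Integration.integral_combine gEi) auto
  have sub: "((\<lambda>s. (s / rho s) *\<^sub>R (g (rho s) * E (rho s))) has_integral
      integral {rho 0..rho L} (\<lambda>s. g s * E s)) {0..L}"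
  proof (rule has_integral_substitution[where c = r and d = "rho L"])
    show "0 \<le> L" using L by simp
    show "rho 0 \<le> rho L" unfolding rho_def by simp
    show "rho ` {0..L} \<subseteq> {r..rho L}" using rhor unfolding rho_def by auto
    show "continuous_on {r..rho L} (\<lambda>s. g s * E s)" by (rule continuous_on_subset[OF gEc]) simp
    show "(rho has_field_derivative s / rho s) (at s within {0..L})" for s
      unfolding rho_def by (rule rho_deriv[OF r])
  qed
  have sub2: "integral {r..rho L} (\<lambda>s. g s * E s) =
      integral {0..L} (\<lambda>s. - (complex_of_real (s / rho s) * g (rho s) * E s))"
  proof -
    have eqf: "(\<lambda>s. (s / rho s) *\<^sub>R (g (rho s) * E (rho s))) = (\<lambda>s. - (complex_of_real (s / rho s) * g (rho s) * E s))"
      by (simp add: Erho scaleR_conv_of_real fun_eq_iff)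
    have "((\<lambda>s. - (complex_of_real (s / rho s) * g (rho s) * E s)) has_integral integral {r..rho L} (\<lambda>s. g s * E s)) {0..L}"
      using sub unfolding eqf rhor0 .
    then show ?thesis by (rule integral_unique[symmetric])
  qed
  define D where "D s = (g s - complex_of_real (s / rho s) * g (rho s)) * E s" for s
  have rhoc: "continuous_on UNIV rho" unfolding rho_def by (intro continuous_intros)
  have Dc: "continuous_on UNIV D"
  proof -
    have nz: "\<forall>x\<in>UNIV. rho x \<noteq> 0" using rhopos by (metis less_irrefl)
    have gr: "continuous_on UNIV (\<lambda>s. g (rho s))" by (rule continuous_on_compose2[OF gc rhoc]) auto
    show ?thesis unfolding D_def
      by (intro continuous_intros gc Ec rhoc gr nz)
  qed
  have Di: "D integrable_on {0..L}"
    by (rule integrable_continuous_real) (rule continuous_on_subset[OF Dc], simp)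
  have mi: "(\<lambda>s. - (complex_of_real (s / rho s) * g (rho s) * E s)) integrable_on {0..L}"
  proof -
    have "(\<lambda>s. - (complex_of_real (s / rho s) * g (rho s) * E s)) = (\<lambda>s. D s - g s * E s)"
      by (auto simp: D_def algebra_simps)
    then show ?thesis using Di gEi by (simp add: integrable_diff)
  qed
  have twoI: "2 * I = integral {0..r} (\<lambda>s. g s * E s) + integral {0..L} D"
  proof -
    have "integral {0..L} D = integral {0..L} (\<lambda>s. - (complex_of_real (s / rho s) * g (rho s) * E s)) + I"
    proof -
      have "integral {0..L} (\<lambda>s. - (complex_of_real (s / rho s) * g (rho s) * E s)) + integral {0..L} (\<lambda>s. g s * E s)
          = integral {0..L} (\<lambda>s. - (complex_of_real (s / rho s) * g (rho s) * E s) + g s * E s)"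
        by (rule integral_add[symmetric, OF mi gEi])
      also have "\<dots> = integral {0..L} D"
        by (rule integral_cong) (simp add: D_def algebra_simps)
      finally show ?thesis by (simp add: I_def)
    qed
    then show ?thesis using I1 I2 sub2 by (simp add: algebra_simps)
  qed
  define B where "B s = H * r / sqrt (s + r) + 2 * S * r\<^sup>2 / (s + r)\<^sup>2" for s
  define A where "A s = 2 * H * r * sqrt (s + r) - 2 * S * r\<^sup>2 / (s + r)" for s
  have AB: "(B has_integral (A L - A 0)) {0..L}"
  proof (rule fundamental_theorem_of_calculus)
    show "0 \<le> L" using L by simp
    fix s assume s: "s \<in> {0..L}"
    then have sp: "s + r > 0" using r by auto
    show "(A has_vector_derivative B s) (at s within {0..L})"
      unfolding has_real_derivative_iff_has_vector_derivative[symmetric] A_def B_def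
      by (rule has_field_derivative_at_within[OF A_deriv[OF sp]])
  qed
  have ALe: "A L - A 0 \<le> 2 * H * r * sqrt L + 2 * S * r"
  proof -
    have "sqrt (L + r) \<le> sqrt L + sqrt r"
      by (rule real_le_lsqrt) (use L r in \<open>auto simp: power2_eq_square algebra_simps\<close>)
    then have "2 * H * r * sqrt (L + r) \<le> 2 * H * r * (sqrt L + sqrt r)"
      using H0 r by (intro mult_left_mono) auto
    moreover have "2 * S * r\<^sup>2 / (0 + r) = 2 * S * r" using r by (simp add: power2_eq_square)
    moreover have "2 * S * r\<^sup>2 / (L + r) \<ge> 0" using S0 L r by simp
    ultimately show ?thesis unfolding A_def using r by (simp add: algebra_simps)
  qed
  have Dle: "norm (D s) \<le> B s" if s: "s \<in> {0..L}" for s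
  proof -
    have s0: "s \<ge> 0" using s by simp
    have "norm (D s) = cmod (g s - complex_of_real (s / rho s) * g (rho s))"
      by (simp add: D_def E_def norm_mult)
    also have "g s - complex_of_real (s / rho s) * g (rho s)
        = (g s - g (rho s)) + complex_of_real (1 - s / rho s) * g (rho s)"
      by (simp add: algebra_simps)
    also have "cmod \<dots> \<le> cmod (g s - g (rho s)) + \<bar>1 - s / rho s\<bar> * cmod (g (rho s))"
    proof -
      have "cmod (complex_of_real (1 - s / rho s) * g (rho s)) = \<bar>1 - s / rho s\<bar> * cmod (g (rho s))"
        by (simp only: norm_mult norm_of_real)
      then show ?thesis by (metis norm_triangle_ineq)
    qed
    also have "\<dots> \<le> H * (r / sqrt (s + r)) + (2 * r\<^sup>2 / (s + r)\<^sup>2) * S"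
    proof (rule add_mono)
      show "cmod (g s - g (rho s)) \<le> H * (r / sqrt (s + r))"
        using H[of s "rho s"] R1[OF s0 r rho0 rho2] H0
        by (meson mult_left_mono order_trans)
      show "\<bar>1 - s / rho s\<bar> * cmod (g (rho s)) \<le> 2 * r\<^sup>2 / (s + r)\<^sup>2 * S"
        using R2[OF s0 r rho0 rho2] S[of "rho s"]
        by (intro mult_mono) auto
    qed
    also have "\<dots> = B s" by (simp add: B_def)
    finally show ?thesis .
  qed
  have nD: "norm (integral {0..L} D) \<le> 2 * H * r * sqrt L + 2 * S * r"
  proof -
    have "norm (integral {0..L} D) \<le> integral {0..L} B"
      by (rule integral_norm_bound_integral[OF Di]) (use AB Dle in auto)
    also have "\<dots> = A L - A 0" using AB by (simp add: has_integral_iff)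
    finally show ?thesis using ALe by linarith
  qed
  have n0: "norm (integral {0..r} (\<lambda>s. g s * E s)) \<le> S * r"
  proof -
    have "norm (integral {0..r} (\<lambda>s. g s * E s)) \<le> integral {0..r} (\<lambda>s. S)"
      by (rule integral_norm_bound_integral[OF gEi]) (auto simp: norm_mult E_def S)
    also have "\<dots> = S * r" using r by simp
    finally show ?thesis .
  qed
  have twoc: "2 * cmod I \<le> S * r + (2 * H * r * sqrt L + 2 * S * r)"
  proof -
    have "2 * cmod I = cmod (2 * I)" by (simp add: norm_mult)
    also have "\<dots> \<le> norm (integral {0..r} (\<lambda>s. g s * E s)) + norm (integral {0..L} D)"
      unfolding twoI by (rule norm_triangle_ineq)
    finally show ?thesis using n0 nD by linarith
  qed
  then have "cmod I \<le> r * (2 * S + 2 * H * sqrt L)"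
  proof -
    have "S * r \<ge> 0" "H * r * sqrt L \<ge> 0" using S0 r H0 L by auto
    then show ?thesis using twoc by (simp add: algebra_simps)
  qed
  then show ?thesis by (simp add: I_def E_def r_def)
qed

lemma lint_eq:
  fixes F :: "real \<Rightarrow> complex"
  assumes Fc: "continuous_on UNIV F" and Fz: "\<And>t. t \<notin> {p..q} \<Longrightarrow> F t = 0"
  shows "(LINT t|lborel. F t) = integral {p..q} F"
proof -
  have i: "integrable lborel (\<lambda>t. indicator {p..q} t *\<^sub>R F t)"
    by (rule borel_integrable_compact) (auto intro: continuous_on_subset[OF Fc])
  have e: "(\<lambda>t. indicator {p..q} t *\<^sub>R F t) = F" using Fz by (auto simp: indicator_def fun_eq_iff)
  have i2: "integrable lborel F" using i e by simp
  have "(LINT t|lborel. F t) = integral UNIV F" using integral_lborel[OF i2] by simp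
  also have "integral UNIV F = integral UNIV (\<lambda>t. if t \<in> {p..q} then F t else 0)"
    by (rule arg_cong[where f="integral UNIV"]) (auto simp: fun_eq_iff Fz)
  also have "\<dots> = integral {p..q} F" by (rule integral_restrict_UNIV)
  finally show ?thesis .
qed

lemma pointwise_bound:
  fixes f :: "real \<Rightarrow> complex" and a x c d S H :: real
  assumes a: "a > 0" and cd: "c < d"
    and S: "\<And>s. cmod (f s) \<le> S"
    and H: "\<And>x y. cmod (f x - f y) \<le> H * \<bar>x - y\<bar> powr (1/2)" and H0: "H \<ge> 0"
    and z: "\<And>t. t \<notin> {c<..<d} \<Longrightarrow> f t = 0"
  shows "cmod (complex_of_real (1 / sqrt (2 * pi)) * cis (pi / 4) / complex_of_real (sqrt (2 * a))
           * (LINT t|lborel. f t * cis (- ((x - t)\<^sup>2 / (4 * a)))))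
         \<le> 4 * S + 4 * H * sqrt (\<bar>c - x\<bar> + \<bar>d - x\<bar>)"
proof -
  define L where "L = \<bar>c - x\<bar> + \<bar>d - x\<bar>"
  have L: "L > 0" using cd by (auto simp: L_def)
  define E where "E s = cis (- (s\<^sup>2 / (4*a)))" for s
  define F where "F t = f t * cis (- ((x - t)\<^sup>2 / (4 * a)))" for t
  have fc: "continuous_on UNIV f" by (rule holder_cont[OF H H0])
  have Ec: "continuous_on UNIV E" unfolding E_def by (intro continuous_intros) (use a in auto)
  have Fc: "continuous_on UNIV F" unfolding F_def by (intro continuous_intros fc) (use a in auto)
  have Fz: "F t = 0" if "t \<notin> {x - L..x + L}" for t
  proof -
    have "t \<notin> {c<..<d}" using that by (auto simp: L_def)
    then show ?thesis by (simp add: F_def z)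
  qed
  have lint: "(LINT t|lborel. F t) = integral {x - L..x + L} F" by (rule lint_eq[OF Fc Fz])
  define G where "G s = F (s + x)" for s
  have GE: "G s = f (x + s) * E s" for s by (simp add: G_def F_def E_def algebra_simps power2_eq_square)
  have GE': "G (- s) = f (x - s) * E s" for s by (simp add: G_def F_def E_def algebra_simps power2_eq_square)
  have Gc: "continuous_on UNIV G" unfolding G_def
    by (rule continuous_on_compose2[OF Fc]) (auto intro!: continuous_intros)
  have Gi: "G integrable_on {p..q}" for p q
    by (rule integrable_continuous_real) (rule continuous_on_subset[OF Gc], simp)
  have sh: "integral {x - L..x + L} F = integral {-L..L} G"
  proof -
    have "integral {-L..L} (F \<circ> (+) x) = integral {-L + x..L + x} F" by (rule integral_shift_Icc_real)
    moreover have "F \<circ> (+) x = G" by (auto simp: G_def fun_eq_iff algebra_simps)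
    ultimately show ?thesis by (simp add: algebra_simps)
  qed
  have sp: "integral {-L..L} G = integral {-L..0} G + integral {0..L} G"
    using L by (intro Henstock_Kurzweil_Integration.integral_combine[symmetric] Gi) auto
  have rf: "integral {-L..0} G = integral {0..L} (\<lambda>s. G (- s))"
    using Henstock_Kurzweil_Integration.integral_reflect_real[of 0 "-L" G] by simp
  have b1: "cmod (integral {0..L} (\<lambda>s. f (x + s) * E s)) \<le> sqrt (4*pi*a) * (2 * S + 2 * H * sqrt L)"
    unfolding E_def
  proof (rule osc_bound[OF a L])
    show "cmod (f (x + s)) \<le> S" for s by (rule S)
    show "cmod (f (x + s) - f (x + s')) \<le> H * \<bar>s - s'\<bar> powr (1/2)" for s s'
      using H[of "x + s" "x + s'"] by simp
    show "f (x + s) = 0" if "s \<ge> L" for s using that by (intro z) (auto simp: L_def)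
  qed (rule H0)
  have b2: "cmod (integral {0..L} (\<lambda>s. f (x - s) * E s)) \<le> sqrt (4*pi*a) * (2 * S + 2 * H * sqrt L)"
    unfolding E_def
  proof (rule osc_bound[OF a L])
    show "cmod (f (x - s)) \<le> S" for s by (rule S)
    show "cmod (f (x - s) - f (x - s')) \<le> H * \<bar>s - s'\<bar> powr (1/2)" for s s'
      using H[of "x - s" "x - s'"] by (simp add: abs_minus_commute)
    show "f (x - s) = 0" if "s \<ge> L" for s using that by (intro z) (auto simp: L_def)
  qed (rule H0)
  have J: "(LINT t|lborel. f t * cis (- ((x - t)\<^sup>2 / (4 * a))))
      = integral {0..L} (\<lambda>s. f (x - s) * E s) + integral {0..L} (\<lambda>s. f (x + s) * E s)"
  proof -
    have G1: "(\<lambda>s. G (- s)) = (\<lambda>s. f (x - s) * E s)" by (rule ext) (rule GE')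
    have G2: "G = (\<lambda>s. f (x + s) * E s)" by (rule ext) (rule GE)
    have "(LINT t|lborel. f t * cis (- ((x - t)\<^sup>2 / (4 * a)))) = (LINT t|lborel. F t)" by (simp add: F_def)
    also have "\<dots> = integral {0..L} (\<lambda>s. G (- s)) + integral {0..L} G" using lint sh sp rf by simp
    finally show ?thesis unfolding G1 by (simp only: G2[symmetric])
  qed
  have nJ: "cmod (LINT t|lborel. f t * cis (- ((x - t)\<^sup>2 / (4 * a)))) \<le> sqrt (4*pi*a) * (4 * S + 4 * H * sqrt L)"
    unfolding J using b1 b2 norm_triangle_ineq[of "integral {0..L} (\<lambda>s. f (x - s) * E s)" "integral {0..L} (\<lambda>s. f (x + s) * E s)"]
    by (simp add: algebra_simps)
  have coef: "cmod (complex_of_real (1 / sqrt (2 * pi)) * cis (pi / 4) / complex_of_real (sqrt (2 * a))) * sqrt (4*pi*a) = 1"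
  proof -
    have "sqrt (4*pi*a) = sqrt (2 * pi) * sqrt (2 * a)" by (simp add: real_sqrt_mult[symmetric])
    moreover have "sqrt (2 * pi) > 0" "sqrt (2 * a) > 0" using a by auto
    ultimately show ?thesis by (simp add: norm_mult norm_divide)
  qed
  have "cmod (complex_of_real (1 / sqrt (2 * pi)) * cis (pi / 4) / complex_of_real (sqrt (2 * a))
           * (LINT t|lborel. f t * cis (- ((x - t)\<^sup>2 / (4 * a)))))
      \<le> cmod (complex_of_real (1 / sqrt (2 * pi)) * cis (pi / 4) / complex_of_real (sqrt (2 * a)))
         * (sqrt (4*pi*a) * (4 * S + 4 * H * sqrt L))"
    unfolding norm_mult by (rule mult_left_mono[OF nJ norm_ge_zero])
  also have "\<dots> = 4 * S + 4 * H * sqrt L" using coef by (simp only: mult.assoc[symmetric]) simp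
  finally show ?thesis by (simp add: L_def)
qed

lemma meas_sup:
  fixes h :: "real \<Rightarrow> real \<Rightarrow> complex"
  assumes hc: "\<And>a. a \<in> A \<Longrightarrow> continuous_on UNIV (h a)"
  shows "(\<lambda>u. SUP a\<in>A. ereal (cmod (h a u))) \<in> borel_measurable lborel"
proof (rule borel_measurableI_greater)
  fix y :: ereal
  have eq: "{u \<in> space lborel. y < (SUP a\<in>A. ereal (cmod (h a u)))} = (\<Union>a\<in>A. {u. y < ereal (cmod (h a u))})"
    by (auto simp: less_SUP_iff)
  have op: "open {u. y < ereal (cmod (h a u))}" if a: "a \<in> A" for a
  proof (cases y)
    case (real z)
    then have "{u. y < ereal (cmod (h a u))} = {u. z < cmod (h a u)}" by auto
    moreover have "open {u. z < cmod (h a u)}"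
      by (rule open_Collect_less) (intro continuous_intros hc a)+
    ultimately show ?thesis by simp
  next
    case PInf
    then show ?thesis by simp
  next
    case MInf
    then have "{u. y < ereal (cmod (h a u))} = UNIV" by auto
    then show ?thesis by simp
  qed
  have "open (\<Union>a\<in>A. {u. y < ereal (cmod (h a u))})" using op by blast
  then show "{u \<in> space lborel. y < (SUP a\<in>A. ereal (cmod (h a u)))} \<in> sets lborel"
    unfolding eq by simp
qed

lemma L_cont:
  fixes f :: "real \<Rightarrow> complex"
  assumes fc: "continuous_on UNIV f" and z: "\<And>t. t \<notin> {c<..<d} \<Longrightarrow> f t = 0"
  shows "continuous_on UNIV (L_op b a f)"
proof (cases "a = 0")
  case True
  have "L_op b a f = (\<lambda>u. f (b 0 * u))" using True by (simp add: L_op_def fun_eq_iff)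
  moreover have "continuous_on UNIV (\<lambda>u. f (b 0 * u))"
    by (rule continuous_on_compose2[OF fc]) (auto intro!: continuous_intros)
  ultimately show ?thesis by simp
next
  case False
  define F where "F u t = f t * cis (- ((b a * u - t)\<^sup>2 / (4 * a)))" for u t
  have cp: "continuous_on UNIV (\<lambda>p::real\<times>real. F (fst p) (snd p))"
    unfolding F_def
    by (intro continuous_intros continuous_on_compose2[OF fc]) (use False in auto)
  have cp2: "continuous_on (UNIV \<times> cbox c d) (\<lambda>(u, t). F u t)"
    using continuous_on_subset[OF cp] by (simp add: split_beta')
  have Fc: "continuous_on UNIV (F u)" for u
  proof -
    have "continuous_on UNIV (\<lambda>t. (\<lambda>p::real\<times>real. F (fst p) (snd p)) (u, t))"
      by (rule continuous_on_compose2[OF cp]) (auto intro!: continuous_intros)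
    then show ?thesis by simp
  qed
  have Fz: "F u t = 0" if "t \<notin> {c..d}" for u t
  proof -
    have "t \<notin> {c<..<d}" using that by auto
    then show ?thesis by (simp add: F_def z)
  qed
  have eq: "L_op b a f = (\<lambda>u. complex_of_real (1 / sqrt (2 * pi)) * cis (pi / 4) / complex_of_real (sqrt (2 * a))
           * integral (cbox c d) (F u))"
  proof -
    have li: "(LINT t|lborel. F u t) = integral {c..d} (F u)" for u
      by (rule lint_eq) (rule Fc, rule Fz)
    show ?thesis using False by (simp add: L_op_def fun_eq_iff li F_def[symmetric] cbox_interval)
  qed
  show ?thesis unfolding eq
    by (intro continuous_intros integral_continuous_on_param cp2)
qed

lemma holder_facts:
  fixes f :: "real \<Rightarrow> complex" and c d :: real
  assumes hc: "holder_c (1/2) c d f" and cd: "c < d"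
  shows "\<And>x. cmod (f x) \<le> (SUP x. cmod (f x))"
    and "\<And>x y. cmod (f x - f y) \<le> (SUP p \<in> {p::real\<times>real. fst p \<noteq> snd p}.
        cmod (f (fst p) - f (snd p)) / \<bar>fst p - snd p\<bar> powr (1/2)) * \<bar>x - y\<bar> powr (1/2)"
    and "(SUP x. cmod (f x)) \<ge> 0"
    and "(SUP p \<in> {p::real\<times>real. fst p \<noteq> snd p}.
        cmod (f (fst p) - f (snd p)) / \<bar>fst p - snd p\<bar> powr (1/2)) \<ge> 0"
    and "\<And>t. t \<notin> {c<..<d} \<Longrightarrow> f t = 0"
proof -
  from hc obtain K where K: "\<And>x y. cmod (f x - f y) \<le> K * \<bar>x - y\<bar> powr (1/2)"
    and z: "\<And>t. t \<notin> {c<..<d} \<Longrightarrow> f t = 0"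
    unfolding holder_c_def by blast
  show "\<And>t. t \<notin> {c<..<d} \<Longrightarrow> f t = 0" by (rule z)
  have "cmod (f 1 - f 0) \<le> K" using K[of 1 0] by simp
  then have K0: "K \<ge> 0" using norm_ge_zero[of "f 1 - f 0"] by linarith
  have fb: "cmod (f x) \<le> K * (d - c) powr (1/2)" for x
  proof (cases "x \<in> {c<..<d}")
    case True
    have "f c = 0" by (rule z) simp
    then have "cmod (f x) = cmod (f x - f c)" by simp
    also have "\<dots> \<le> K * \<bar>x - c\<bar> powr (1/2)" by (rule K)
    also have "\<dots> \<le> K * (d - c) powr (1/2)"
      using True K0 by (intro mult_left_mono powr_mono2) auto
    finally show ?thesis .
  next
    case False
    then show ?thesis using K0 by (simp add: z)
  qed
  define P where "P = {p::real\<times>real. fst p \<noteq> snd p}"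
  define q where "q p = cmod (f (fst p) - f (snd p)) / \<bar>fst p - snd p\<bar> powr (1/2)" for p :: "real \<times> real"
  have qb: "q p \<le> K" if "p \<in> P" for p
  proof -
    have pos: "\<bar>fst p - snd p\<bar> powr (1/2) > 0" using that by (simp add: P_def)
    show ?thesis unfolding q_def using K[of "fst p" "snd p"] pos by (simp add: pos_divide_le_eq)
  qed
  have q0: "q p \<ge> 0" for p by (simp add: q_def)
  have bd1: "bdd_above (range (\<lambda>x. cmod (f x)))" using fb by (intro bdd_aboveI2) auto
  have bd2: "bdd_above (q ` P)" using qb by (intro bdd_aboveI2) auto
  have P1: "(1, 0) \<in> P" by (simp add: P_def)
  show "\<And>x. cmod (f x) \<le> (SUP x. cmod (f x))" by (rule cSUP_upper[OF _ bd1]) simp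
  show "(SUP x. cmod (f x)) \<ge> 0" using cSUP_upper[OF UNIV_I bd1, of 0] norm_ge_zero[of "f 0"] by linarith
  show "(SUP p \<in> {p::real\<times>real. fst p \<noteq> snd p}.
        cmod (f (fst p) - f (snd p)) / \<bar>fst p - snd p\<bar> powr (1/2)) \<ge> 0"
    using cSUP_upper[OF P1 bd2] q0[of "(1,0)"] unfolding P_def q_def by linarith
  show "cmod (f x - f y) \<le> (SUP p \<in> {p::real\<times>real. fst p \<noteq> snd p}.
        cmod (f (fst p) - f (snd p)) / \<bar>fst p - snd p\<bar> powr (1/2)) * \<bar>x - y\<bar> powr (1/2)" for x y
  proof (cases "x = y")
    case True then show ?thesis by simp
  next
    case False
    then have xy: "(x, y) \<in> P" by (simp add: P_def)
    have pos: "\<bar>x - y\<bar> powr (1/2) > 0" using False by simp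
    have "q (x, y) \<le> (SUP p \<in> P. q p)" by (rule cSUP_upper[OF xy bd2])
    then have "cmod (f x - f y) \<le> (SUP p \<in> P. q p) * \<bar>x - y\<bar> powr (1/2)"
      using pos by (simp add: q_def pos_divide_le_eq)
    then show ?thesis by (simp add: P_def q_def)
  qed
qed

theorem theorem6:
  fixes c1 c d :: real and b :: "real \<Rightarrow> real"
  assumes "c1 > 0"
    and "\<exists>K. K-lipschitz_on {0..c1} b"
    and "b 0 = 1"
    and "c < d"
  shows "\<exists>C2 > 0. \<forall>R > \<bar>c\<bar> + \<bar>d\<bar>. \<forall>f. holder_c (1/2) c d f \<longrightarrow>
           esssup (restrict_space lborel {-R..R})
             (\<lambda>u. SUP a \<in> {0..c1}. ereal (cmod (L_op b a f u)))
           \<le> ereal (C2 * (1 + \<bar>d - c\<bar>) * R powr (1/2) * holder_norm (1/2) f)"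
proof -
  note c1 = assms(1) and b0 = assms(3) and cd = assms(4)
  from assms(2) obtain K where lip: "K-lipschitz_on {0..c1} b" by blast
  define M where "M = 1 + \<bar>K\<bar> * c1"
  have M1: "M \<ge> 1" using c1 by (simp add: M_def)
  have bM: "\<bar>b a\<bar> \<le> M" if "a \<in> {0..c1}" for a
  proof -
    have "dist (b a) (b 0) \<le> K * dist a 0" by (rule lipschitz_onD[OF lip that]) (use c1 in simp)
    also have "\<dots> \<le> \<bar>K\<bar> * c1"
    proof -
      have a0: "0 \<le> a" "a \<le> c1" using that by auto
      have "K * dist a 0 = K * a" using a0 by (simp add: dist_real_def)
      also have "\<dots> \<le> \<bar>K\<bar> * a" using a0 by (intro mult_right_mono) auto
      also have "\<dots> \<le> \<bar>K\<bar> * c1" using a0 by (intro mult_left_mono) auto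
      finally show ?thesis .
    qed
    finally have "\<bar>b a - 1\<bar> \<le> \<bar>K\<bar> * c1" using b0 by (simp add: dist_real_def)
    then show ?thesis by (simp add: M_def)
  qed
  define C2 where "C2 = 4 / sqrt (d - c) + 4 * sqrt (1 + 2 * M)"
  have dc: "sqrt (d - c) > 0" using cd by simp
  have C2: "C2 > 0" using dc M1 by (simp add: C2_def add_pos_pos)
  show ?thesis
  proof (intro exI[of _ C2] conjI C2 allI impI)
    fix R :: real and f :: "real \<Rightarrow> complex"
    assume R: "R > \<bar>c\<bar> + \<bar>d\<bar>" and hc: "holder_c (1/2) c d f"
    define S where "S = (SUP x. cmod (f x))"
    define Q where "Q = (SUP p \<in> {p::real\<times>real. fst p \<noteq> snd p}.
        cmod (f (fst p) - f (snd p)) / \<bar>fst p - snd p\<bar> powr (1/2))"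
    have N: "holder_norm (1/2) f = S + Q" by (simp add: holder_norm_def S_def Q_def)
    have fS: "cmod (f x) \<le> S" for x unfolding S_def by (rule holder_facts(1)[OF hc cd])
    have fQ: "cmod (f x - f y) \<le> Q * \<bar>x - y\<bar> powr (1/2)" for x y unfolding Q_def by (rule holder_facts(2)[OF hc cd])
    have S0: "S \<ge> 0" unfolding S_def by (rule holder_facts(3)[OF hc cd])
    have Q0: "Q \<ge> 0" unfolding Q_def by (rule holder_facts(4)[OF hc cd])
    have z: "\<And>t. t \<notin> {c<..<d} \<Longrightarrow> f t = 0" by (rule holder_facts(5)[OF hc cd])
    have fc: "continuous_on UNIV f" by (rule holder_cont[OF fQ Q0])
    have Rdc: "R \<ge> d - c" using R by linarith
    have Rp: "R > 0" using Rdc cd by linarith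
    define Bd where "Bd = C2 * (1 + \<bar>d - c\<bar>) * R powr (1/2) * holder_norm (1/2) f"
    have sR: "R powr (1/2) = sqrt R" using Rp by (simp add: powr_half_sqrt)
    have key: "4 * S + 4 * Q * sqrt (\<bar>c - x\<bar> + \<bar>d - x\<bar>) \<le> Bd" if x: "\<bar>x\<bar> \<le> M * R" for x
    proof -
      have "\<bar>c - x\<bar> + \<bar>d - x\<bar> \<le> (1 + 2 * M) * R" using x R by (simp add: algebra_simps)
      then have "sqrt (\<bar>c - x\<bar> + \<bar>d - x\<bar>) \<le> sqrt ((1 + 2 * M) * R)" by simp
      also have "\<dots> = sqrt (1 + 2 * M) * sqrt R" by (simp add: real_sqrt_mult)
      finally have l1: "4 * Q * sqrt (\<bar>c - x\<bar> + \<bar>d - x\<bar>) \<le> 4 * Q * (sqrt (1 + 2 * M) * sqrt R)"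
        using Q0 by (intro mult_left_mono) auto
      have "sqrt (d - c) \<le> sqrt R" using Rdc by simp
      then have one: "1 \<le> sqrt R / sqrt (d - c)" using dc by simp
      have l2: "4 * S \<le> 4 * S * (sqrt R / sqrt (d - c))" using mult_left_mono[OF one, of "4 * S"] S0 by simp
      have "4 * S + 4 * Q * sqrt (\<bar>c - x\<bar> + \<bar>d - x\<bar>)
          \<le> 4 * S * (sqrt R / sqrt (d - c)) + 4 * Q * (sqrt (1 + 2 * M) * sqrt R)"
        using l1 l2 by linarith
      also have "\<dots> \<le> C2 * sqrt R * (S + Q)"
      proof -
        have "C2 * sqrt R * (S + Q) = 4 * S * (sqrt R / sqrt (d - c)) + 4 * Q * (sqrt (1 + 2 * M) * sqrt R)
             + (4 * Q * (sqrt R / sqrt (d - c)) + 4 * S * (sqrt (1 + 2 * M) * sqrt R))"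
          by (simp add: C2_def algebra_simps add_divide_distrib)
        moreover have "4 * Q * (sqrt R / sqrt (d - c)) \<ge> 0" "4 * S * (sqrt (1 + 2 * M) * sqrt R) \<ge> 0"
          using Q0 S0 dc Rp M1 by auto
        ultimately show ?thesis by linarith
      qed
      also have "\<dots> \<le> C2 * sqrt R * (S + Q) * (1 + \<bar>d - c\<bar>)"
      proof -
        have "C2 * sqrt R * (S + Q) \<ge> 0" using C2 Rp S0 Q0 by simp
        then show ?thesis using mult_left_mono[of 1 "1 + \<bar>d - c\<bar>" "C2 * sqrt R * (S + Q)"] by simp
      qed
      also have "\<dots> = Bd" by (simp add: Bd_def sR N algebra_simps)
      finally show ?thesis .
    qed
    have pt: "cmod (L_op b a f u) \<le> Bd" if a: "a \<in> {0..c1}" and u: "u \<in> {-R..R}" for a u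
    proof (cases "a = 0")
      case True
      then have "cmod (L_op b a f u) = cmod (f u)" using b0 by (simp add: L_op_def)
      also have "\<dots> \<le> 4 * S + 4 * Q * sqrt (\<bar>c - 0\<bar> + \<bar>d - 0\<bar>)" 
      proof -
        have "0 \<le> Q * sqrt (\<bar>c - 0\<bar> + \<bar>d - 0\<bar>)" using Q0 by simp
        then show ?thesis using fS[of u] S0 by linarith
      qed
      also have "\<dots> \<le> Bd" by (rule key) (use M1 Rp in simp)
      finally show ?thesis .
    next
      case False
      then have ap: "a > 0" using a by simp
      have "cmod (L_op b a f u) \<le> 4 * S + 4 * Q * sqrt (\<bar>c - b a * u\<bar> + \<bar>d - b a * u\<bar>)"
        unfolding L_op_def using False
        by (simp only: if_False) (rule pointwise_bound[OF ap cd fS fQ Q0 z])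
      also have "\<dots> \<le> Bd"
      proof (rule key)
        have "\<bar>b a * u\<bar> = \<bar>b a\<bar> * \<bar>u\<bar>" by (simp add: abs_mult)
        also have "\<dots> \<le> M * R" using bM[OF a] u by (intro mult_mono) auto
        finally show "\<bar>b a * u\<bar> \<le> M * R" .
      qed
      finally show ?thesis .
    qed
    have meas: "(\<lambda>u. SUP a \<in> {0..c1}. ereal (cmod (L_op b a f u))) \<in> borel_measurable (restrict_space lborel {-R..R})"
      by (rule measurable_restrict_space1, rule meas_sup, rule L_cont[OF fc z])
    show "esssup (restrict_space lborel {-R..R}) (\<lambda>u. SUP a \<in> {0..c1}. ereal (cmod (L_op b a f u)))
           \<le> ereal (C2 * (1 + \<bar>d - c\<bar>) * R powr (1/2) * holder_norm (1/2) f)"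
      unfolding Bd_def[symmetric]
    proof (rule esssup_I[OF meas], rule AE_I2)
      fix u assume "u \<in> space (restrict_space lborel {-R..R})"
      then have u: "u \<in> {-R..R}" by (simp add: space_restrict_space)
      show "(SUP a \<in> {0..c1}. ereal (cmod (L_op b a f u))) \<le> ereal Bd"
        by (rule SUP_least) (simp add: pt[OF _ u])
    qed
  qed
qed

end
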